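(* Let $d\ge 1$. There is a constant $C>0$ depending only on $d$ such that for all $n\ge d+1$, every $\mathcal{F}$ and $B_1,\dots,B_m$ as in the context, and every $A\subseteq[n]$, the number of indices $i\in[m]$ with $B_i=A$ is at most $C$. Consequently, for each integer $0\le s\le d$, the number of indices $i\in[m]$ with $|B_i|=s$ is at most $C\binom{n}{s}$.
   Context: Let $\mathcal{F}=\{F_1,\dots,F_m\}\subseteq\binom{[n]}{d+1}$ consist of distinct sets and have VC-dimension at most $d$ (no $(d+1)$-set $S$ is shattered, i.e. no $S$ such that every $A\subseteq S$ equals $F\cap S$ for some $F\in\mathcal{F}$). For $i\in[m]$, call $B\subsetneq F_i$ admissible for $F_i$ if $F\cap F_i\neq B$ for every $F\in\mathcal{F}$ (admissible sets exist by the VC-dimension assumption). For each $i$, $B_i$ is a fixed admissible set for $F_i$ of maximum cardinality among all admissible sets for $F_i$. *)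

theory Defs
  imports Complex_Main
begin

definition shatters :: "'a set set \<Rightarrow> 'a set \<Rightarrow> bool" where
  "shatters \<F> S \<longleftrightarrow> (\<forall>A. A \<subseteq> S \<longrightarrow> (\<exists>F\<in>\<F>. F \<inter> S = A))"

definition vc_dim_le :: "'a set set \<Rightarrow> nat \<Rightarrow> bool" where
  "vc_dim_le \<F> d \<longleftrightarrow> \<not> (\<exists>S. finite S \<and> card S = d + 1 \<and> shatters \<F> S)"

definition admissible :: "'a set set \<Rightarrow> 'a set \<Rightarrow> 'a set \<Rightarrow> bool" where
  "admissible \<F> F B \<longleftrightarrow> B \<subset> F \<and> (\<forall>G\<in>\<F>. G \<inter> F \<noteq> B)"

definition max_admissible :: "'a set set \<Rightarrow> 'a set \<Rightarrow> 'a set \<Rightarrow> bool" where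
  "max_admissible \<F> F B \<longleftrightarrow> admissible \<F> F B \<and>
     (\<forall>B'. admissible \<F> F B' \<longrightarrow> card B' \<le> card B)"

text \<open>The setting of the context: Fs = [F_1,...,F_m] (0-indexed list) of distinct
  (d+1)-subsets of [n] = {1..n}, of VC-dimension at most d, with B i a maximum
  admissible set for Fs ! i.\<close>
definition setting :: "nat \<Rightarrow> nat \<Rightarrow> nat set list \<Rightarrow> (nat \<Rightarrow> nat set) \<Rightarrow> bool" where
  "setting d n Fs B \<longleftrightarrow>
     distinct Fs \<and>
     (\<forall>F\<in>set Fs. F \<subseteq> {1..n} \<and> card F = d + 1) \<and>
     vc_dim_le (set Fs) d \<and>
     (\<forall>i<length Fs. max_admissible (set Fs) (Fs ! i) (B i))"

end

theory Submission
  imports Defs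
begin

definition SS :: "nat set list \<Rightarrow> (nat \<Rightarrow> nat set) \<Rightarrow> nat set \<Rightarrow> nat set \<Rightarrow> nat set" where
  "SS Fs B A T = {j. j < length Fs \<and> B j = A \<and> T \<subseteq> Fs ! j}"

lemma SS_finite: "finite (SS Fs B A T)"
  unfolding SS_def by (rule finite_subset[of _ "{..<length Fs}"]) auto

lemma st_card: "setting d n Fs B \<Longrightarrow> j < length Fs \<Longrightarrow> card (Fs ! j) = d + 1 \<and> finite (Fs ! j) \<and> Fs ! j \<subseteq> {1..n}"
  unfolding setting_def by (metis finite_subset finite_atLeastAtMost nth_mem)

lemma st_adm: "setting d n Fs B \<Longrightarrow> j < length Fs \<Longrightarrow> max_admissible (set Fs) (Fs ! j) (B j)"
  unfolding setting_def by blast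

lemma key:
  assumes st: "setting d n Fs B"
  shows "k = d + 1 - card T \<Longrightarrow> finite T \<Longrightarrow> A \<subseteq> T \<Longrightarrow> card (SS Fs B A T) \<le> (d+1)^k"
proof (induction k arbitrary: T)
  case 0
  have "\<forall>x\<in>SS Fs B A T. \<forall>y\<in>SS Fs B A T. x = y"
  proof (intro ballI)
    fix x y assume x: "x \<in> SS Fs B A T" and y: "y \<in> SS Fs B A T"
    have eq: "Fs ! j = T" if "j \<in> SS Fs B A T" for j
    proof -
      have j: "j < length Fs" "T \<subseteq> Fs ! j" using that unfolding SS_def by auto
      have c: "card (Fs ! j) = d + 1" "finite (Fs ! j)" using st_card[OF st j(1)] by auto
      have "card T \<le> card (Fs ! j)" using card_mono[OF c(2) j(2)] .
      then have "card T = card (Fs ! j)" using 0 c by auto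
      then show ?thesis using card_subset_eq[OF c(2) j(2)] by simp
    qed
    have "Fs ! x = Fs ! y" using eq x y by simp
    moreover have "distinct Fs" using st unfolding setting_def by blast
    ultimately show "x = y" using x y nth_eq_iff_index_eq unfolding SS_def by blast
  qed
  then have "card (SS Fs B A T) \<le> Suc 0" using card_le_Suc0_iff_eq[OF SS_finite] by blast
  then show ?case by simp
next
  case (Suc k)
  show ?case
  proof (cases "SS Fs B A T = {}")
    case True then show ?thesis by simp
  next
    case False
    then obtain i where i: "i \<in> SS Fs B A T" by blast
    have il: "i < length Fs" "B i = A" "T \<subseteq> Fs ! i" using i unfolding SS_def by auto
    have ci: "card (Fs ! i) = d + 1" "finite (Fs ! i)" using st_card[OF st il(1)] by auto
    have ctd: "card T \<le> d" using Suc.prems by simp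
    have admj: "A \<subset> Fs ! j \<and> (\<forall>G\<in>set Fs. G \<inter> Fs ! j \<noteq> A)" if "j \<in> SS Fs B A T" for j
    proof -
      have "j < length Fs" "B j = A" using that unfolding SS_def by auto
      then have "admissible (set Fs) (Fs ! j) A" using st_adm[OF st, of j] unfolding max_admissible_def by simp
      then show ?thesis unfolding admissible_def by simp
    qed
    obtain G where G: "G \<in> set Fs" "\<forall>j\<in>SS Fs B A T. \<exists>x\<in>G. x \<in> Fs ! j \<and> x \<notin> T"
    proof (cases "T = A")
      case True
      show ?thesis
      proof (rule that[of "Fs ! i"])
        show "Fs ! i \<in> set Fs" using il by simp
        show "\<forall>j\<in>SS Fs B A T. \<exists>x\<in>Fs ! i. x \<in> Fs ! j \<and> x \<notin> T"
        proof
          fix j assume j: "j \<in> SS Fs B A T"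
          have "Fs ! i \<inter> Fs ! j \<noteq> A" using admj[OF j] il by simp
          moreover have "A \<subseteq> Fs ! i" "A \<subseteq> Fs ! j" using admj[OF j] admj[OF i] by auto
          ultimately show "\<exists>x\<in>Fs ! i. x \<in> Fs ! j \<and> x \<notin> T" using True by blast
        qed
      qed
    next
      case False
      then obtain t where t: "t \<in> T" "t \<notin> A" using Suc.prems by blast
      define B' where "B' = A \<union> (Fs ! i - T)"
      have "card T < card (Fs ! i)" using ctd ci by simp
      then obtain y where y: "y \<in> Fs ! i" "y \<notin> T"
        using il(3) by (metis psubsetI subsetI card_mono[OF Suc.prems(2)] not_le ci(2) card_mono)
      have Afin: "finite A" using Suc.prems finite_subset by blast
      have "card B' = card A + card (Fs ! i - T)"
        unfolding B'_def using Suc.prems ci(2) Afin by (intro card_Un_disjoint) auto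
      moreover have "card (Fs ! i - T) > 0" using y ci(2) by (metis DiffI card_gt_0_iff empty_iff finite_Diff)
      ultimately have cB: "card B' > card (B i)" using il by simp
      have sub: "B' \<subset> Fs ! i" unfolding B'_def using admj[OF i] t il(3) by blast
      have "\<not> admissible (set Fs) (Fs ! i) B'"
        using st_adm[OF st il(1)] cB unfolding max_admissible_def by force
      then obtain G where G: "G \<in> set Fs" "G \<inter> Fs ! i = B'" using sub unfolding admissible_def by blast
      show ?thesis
      proof (rule that[OF G(1)], rule ballI)
        fix j assume j: "j \<in> SS Fs B A T"
        have "G \<inter> Fs ! j \<noteq> A" using admj[OF j] G by simp
        moreover have "A \<subseteq> G" using G B'_def by blast
        moreover have "A \<subseteq> Fs ! j" using admj[OF j] by auto
        ultimately obtain x where x: "x \<in> G" "x \<in> Fs ! j" "x \<notin> A" by blast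
        have "x \<notin> T"
        proof
          assume "x \<in> T"
          then have "x \<in> G \<inter> Fs ! i" using x il(3) by blast
          then have "x \<in> B'" using G by simp
          then show False using x \<open>x \<in> T\<close> unfolding B'_def by blast
        qed
        then show "\<exists>x\<in>G. x \<in> Fs ! j \<and> x \<notin> T" using x by blast
      qed
    qed
    obtain g where g: "g < length Fs" "G = Fs ! g" using G(1) unfolding in_set_conv_nth by blast
    have cG: "card G = d + 1" "finite G" using st_card[OF st g(1)] g(2) by auto
    have "SS Fs B A T \<subseteq> (\<Union>x\<in>G - T. SS Fs B A (insert x T))"
    proof
      fix j assume j: "j \<in> SS Fs B A T"
      then obtain x where x: "x \<in> G" "x \<in> Fs ! j" "x \<notin> T" using G(2) by blast
      have "j \<in> SS Fs B A (insert x T)" using j x unfolding SS_def by simp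
      then show "j \<in> (\<Union>x\<in>G - T. SS Fs B A (insert x T))" using x by blast
    qed
    moreover have "finite (\<Union>x\<in>G - T. SS Fs B A (insert x T))"
      using cG(2) SS_finite by blast
    ultimately have "card (SS Fs B A T) \<le> card (\<Union>x\<in>G - T. SS Fs B A (insert x T))"
      by (rule card_mono[rotated])
    also have "\<dots> \<le> (\<Sum>x\<in>G - T. card (SS Fs B A (insert x T)))" by (rule card_UN_le) (simp add: cG)
    also have "\<dots> \<le> (\<Sum>x\<in>G - T. (d+1)^k)"
    proof (rule sum_mono)
      fix x assume x: "x \<in> G - T"
      show "card (SS Fs B A (insert x T)) \<le> (d+1)^k"
      proof -
        have "card (insert x T) = Suc (card T)" using x Suc.prems(2) by simp
        then have "k = d + 1 - card (insert x T)" using Suc.prems(1) ctd by simp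
        then show ?thesis using Suc.IH[of "insert x T"] Suc.prems x by auto
      qed
    qed
    also have "\<dots> = card (G - T) * (d+1)^k" by simp
    also have "\<dots> \<le> (d+1) * (d+1)^k" using card_mono[OF cG(2), of "G - T"] cG by (intro mult_right_mono) auto
    finally show ?thesis by simp
  qed
qed

lemma part1:
  assumes st: "setting d n Fs B"
  shows "card {i. i < length Fs \<and> B i = A} \<le> (d+1)^(d+1)"
proof (cases "{i. i < length Fs \<and> B i = A} = {}")
  case True then show ?thesis by (simp only: card.empty) simp?
next
  case False
  then obtain i where i: "i < length Fs" "B i = A" by blast
  have "A \<subset> Fs ! i" using st_adm[OF st i(1)] i unfolding max_admissible_def admissible_def by auto
  then have fA: "finite A" using st_card[OF st i(1)] finite_subset by blast
  have eq: "{i. i < length Fs \<and> B i = A} = SS Fs B A A"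
    unfolding SS_def using st_adm[OF st] unfolding max_admissible_def admissible_def by auto
  have "card (SS Fs B A A) \<le> (d+1)^(d+1-card A)" using key[OF st refl fA] by simp
  also have "\<dots> \<le> (d+1)^(d+1)" by (intro power_increasing) auto
  finally show ?thesis using eq by simp
qed

theorem claim3p2:
  fixes d :: nat
  assumes "d \<ge> 1"
  shows "\<exists>C::real. C > 0 \<and>
    (\<forall>n Fs B A. n \<ge> d + 1 \<and> setting d n Fs B \<and> A \<subseteq> {1..n} \<longrightarrow>
        real (card {i. i < length Fs \<and> B i = A}) \<le> C) \<and>
    (\<forall>n Fs B s. n \<ge> d + 1 \<and> setting d n Fs B \<and> s \<le> d \<longrightarrow>
        real (card {i. i < length Fs \<and> card (B i) = s}) \<le> C * real (n choose s))"
proof (intro exI conjI allI impI)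
  have "(0::nat) < (d+1)^(d+1)" by simp
  then show "real ((d+1)^(d+1)) > 0" by (simp only: of_nat_0_less_iff)
  fix n Fs B A assume h: "n \<ge> d + 1 \<and> setting d n Fs B \<and> A \<subseteq> {1..n}"
  show "real (card {i. i < length Fs \<and> B i = A}) \<le> real ((d+1)^(d+1))"
    using part1[of d n Fs B A] h by (simp only: of_nat_le_iff)
next
  fix n Fs B s assume h: "n \<ge> d + 1 \<and> setting d n Fs B \<and> s \<le> d"
  then have st: "setting d n Fs B" by simp
  let ?P = "{A. A \<subseteq> {1..n} \<and> card A = s}"
  have "{i. i < length Fs \<and> card (B i) = s} \<subseteq> (\<Union>A\<in>?P. {i. i < length Fs \<and> B i = A})"
  proof
    fix i assume i: "i \<in> {i. i < length Fs \<and> card (B i) = s}"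
    have "B i \<subseteq> Fs ! i" using i st_adm[OF st] unfolding max_admissible_def admissible_def by auto
    then have "B i \<subseteq> {1..n}" using st_card[OF st] i by blast
    then show "i \<in> (\<Union>A\<in>?P. {i. i < length Fs \<and> B i = A})" using i by blast
  qed
  then have "card {i. i < length Fs \<and> card (B i) = s} \<le> card (\<Union>A\<in>?P. {i. i < length Fs \<and> B i = A})"
    by (intro card_mono) auto
  also have "\<dots> \<le> (\<Sum>A\<in>?P. card {i. i < length Fs \<and> B i = A})" by (rule card_UN_le) simp
  also have "\<dots> \<le> (\<Sum>A\<in>?P. (d+1)^(d+1))" by (intro sum_mono part1[OF st])
  also have "\<dots> = (n choose s) * (d+1)^(d+1)"
  proof -
    have "card ?P = n choose s" using n_subsets[of "{1..n}" s] by simp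
    then show ?thesis by simp
  qed
  finally have "card {i. i < length Fs \<and> card (B i) = s} \<le> (d+1)^(d+1) * (n choose s)" by (simp only: mult.commute)
  then show "real (card {i. i < length Fs \<and> card (B i) = s}) \<le> real ((d+1)^(d+1)) * real (n choose s)"
    by (simp only: of_nat_mult[symmetric] of_nat_le_iff)
qed

end
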